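(* Let $G=(V,E)$ be a finite signed undirected graph with $V=\{1,\dots,n\}$, $E=E^+\sqcup E^-$, such that the positive subgraph $G^+=(V,E^+)$ is connected and the negative edge set $E^-$ is nonempty. For $\alpha,\beta\ge 0$ consider the dynamics on $x(t)=(x_1(t),\dots,x_n(t))^\top\in\mathbb{R}^n$, $t=0,1,2,\dots$, $$x_i(t+1)=x_i(t)+\alpha\sum_{j\in N_i^+}\big(x_j(t)-x_i(t)\big)-\beta\sum_{j\in N_i^-}\big(x_j(t)-x_i(t)\big),\qquad i\in V.$$ Then for every $\alpha$ with $0<\alpha<1/\max_{i\in V}\deg_i^+$ there exists a critical value $\beta_*\ge 0$ such that: (i) if $\beta<\beta_*$, then $\lim_{t\to\infty}x_i(t)=\frac1n\sum_{j=1}^n x_j(0)$ for every $i\in V$ and every initial value $x(0)\in\mathbb{R}^n$; (ii) if $\beta>\beta_*$, then $\lim_{t\to\infty}\|x(t)\|=\infty$ for Lebesgue-almost every initial value $x(0)\in\mathbb{R}^n$.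
   Context: A signed graph is an undirected simple graph whose edge set is partitioned into positive edges $E^+$ and negative edges $E^-$. For a node $i$, $N_i^+=\{j:\{i,j\}\in E^+\}$ and $N_i^-=\{j:\{i,j\}\in E^-\}$ are its positive and negative neighbor sets, and $\deg_i^+=|N_i^+|$ is its positive degree. *)

theory Defs
  imports "HOL-Analysis.Analysis"
begin

definition signed_graph :: "('n \<Rightarrow> 'n \<Rightarrow> bool) \<Rightarrow> ('n \<Rightarrow> 'n \<Rightarrow> bool) \<Rightarrow> bool" where
  "signed_graph Ep En \<longleftrightarrow>
     (\<forall>i j. Ep i j \<longrightarrow> Ep j i) \<and> (\<forall>i j. En i j \<longrightarrow> En j i) \<and>
     (\<forall>i. \<not> Ep i i) \<and> (\<forall>i. \<not> En i i) \<and> (\<forall>i j. \<not> (Ep i j \<and> En i j))"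

definition nbrs :: "('n \<Rightarrow> 'n \<Rightarrow> bool) \<Rightarrow> 'n \<Rightarrow> 'n set" where
  "nbrs E i = {j. E i j}"

definition pos_deg :: "('n \<Rightarrow> 'n \<Rightarrow> bool) \<Rightarrow> 'n \<Rightarrow> nat" where
  "pos_deg Ep i = card (nbrs Ep i)"

definition max_pos_deg :: "('n::finite \<Rightarrow> 'n \<Rightarrow> bool) \<Rightarrow> nat" where
  "max_pos_deg Ep = Max (range (pos_deg Ep))"

definition connected_graph :: "('n \<Rightarrow> 'n \<Rightarrow> bool) \<Rightarrow> bool" where
  "connected_graph E \<longleftrightarrow> (\<forall>i j. E\<^sup>*\<^sup>* i j)"

definition sstep :: "real \<Rightarrow> real \<Rightarrow> ('n::finite \<Rightarrow> 'n \<Rightarrow> bool) \<Rightarrow> ('n \<Rightarrow> 'n \<Rightarrow> bool)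
     \<Rightarrow> real^'n \<Rightarrow> real^'n" where
  "sstep \<alpha> \<beta> Ep En x = (\<chi> i. x$i + \<alpha> * (\<Sum>j\<in>nbrs Ep i. x$j - x$i)
                                   - \<beta> * (\<Sum>j\<in>nbrs En i. x$j - x$i))"

definition traj :: "real \<Rightarrow> real \<Rightarrow> ('n::finite \<Rightarrow> 'n \<Rightarrow> bool) \<Rightarrow> ('n \<Rightarrow> 'n \<Rightarrow> bool)
     \<Rightarrow> real^'n \<Rightarrow> nat \<Rightarrow> real^'n" where
  "traj \<alpha> \<beta> Ep En x0 t = (sstep \<alpha> \<beta> Ep En ^^ t) x0"

end

theory Submission
  imports Defs
begin


definition S2 :: "('n::finite \<Rightarrow> 'n \<Rightarrow> bool) \<Rightarrow> real^'n \<Rightarrow> real^'n \<Rightarrow> real" where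
  "S2 E x y = (\<Sum>i\<in>UNIV. \<Sum>j\<in>UNIV. if E i j then (x$j - x$i) * (y$j - y$i) else 0)"

lemma nbrs_sum: "(\<Sum>j\<in>nbrs E i. g j) = (\<Sum>j\<in>UNIV. if E i j then g j else 0)" for E :: "'n::finite \<Rightarrow> 'n \<Rightarrow> bool"
proof -
  have "nbrs E i = {j\<in>UNIV. E i j}" by (simp add: nbrs_def)
  then show ?thesis using sum.inter_filter[of UNIV g "E i"] by simp
qed

lemma lapl_form:
  fixes E :: "'n::finite \<Rightarrow> 'n \<Rightarrow> bool"
  assumes sym: "\<And>i j. E i j \<Longrightarrow> E j i"
  shows "(\<Sum>i\<in>UNIV. (\<Sum>j\<in>nbrs E i. x$j - x$i) * y$i) = - S2 E x y / 2"
proof -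
  let ?A = "\<Sum>i\<in>UNIV. \<Sum>j\<in>UNIV. if E i j then (x$j - x$i) * y$i else 0"
  have 1: "(\<Sum>i\<in>UNIV. (\<Sum>j\<in>nbrs E i. x$j - x$i) * y$i) = ?A"
    by (simp add: nbrs_sum sum_distrib_right) (rule sum.cong[OF refl], rule sum.cong[OF refl], simp)
  have "?A = (\<Sum>j\<in>UNIV. \<Sum>i\<in>UNIV. if E i j then (x$j - x$i) * y$i else 0)"
    by (rule sum.swap)
  also have "\<dots> = (\<Sum>i\<in>UNIV. \<Sum>j\<in>UNIV. if E i j then (x$i - x$j) * y$j else 0)"
    by (rule sum.cong[OF refl], rule sum.cong[OF refl]) (use sym in \<open>metis\<close>)
  finally have 2: "?A = (\<Sum>i\<in>UNIV. \<Sum>j\<in>UNIV. if E i j then (x$i - x$j) * y$j else 0)" .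
  have "2 * ?A = ?A + (\<Sum>i\<in>UNIV. \<Sum>j\<in>UNIV. if E i j then (x$i - x$j) * y$j else 0)"
    using 2 by simp
  also have "\<dots> = (\<Sum>i\<in>UNIV. \<Sum>j\<in>UNIV. (if E i j then (x$j - x$i) * y$i else 0) + (if E i j then (x$i - x$j) * y$j else 0))"
    by (simp add: sum.distrib)
  also have "\<dots> = - S2 E x y"
    unfolding S2_def sum_negf[symmetric]
    by (rule sum.cong[OF refl], rule sum.cong[OF refl]) (simp add: algebra_simps)
  finally show ?thesis using 1 by simp
qed

lemma S2_sym: "S2 E x y = S2 E y x"
  unfolding S2_def by (rule sum.cong[OF refl], rule sum.cong[OF refl]) simp

lemma S2_nonneg: "0 \<le> S2 E x x"
  unfolding S2_def by (intro sum_nonneg) auto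

lemma S2_one: "S2 E (\<chi> i. 1) y = 0"
  unfolding S2_def
  by (subst vec_lambda_beta)+ (simp only: diff_self mult_zero_left if_cancel sum.neutral_const)

lemma S2_add: "S2 E x (y + z) = S2 E x y + S2 E x z"
  unfolding S2_def by (simp add: sum.distrib[symmetric] algebra_simps if_distrib cong: if_cong)

lemma S2_scale: "S2 E x (c *\<^sub>R y) = c * S2 E x y"
  unfolding S2_def by (simp add: sum_distrib_left algebra_simps if_distrib cong: if_cong)

lemma sstep_inner:
  fixes Ep En :: "'n::finite \<Rightarrow> 'n \<Rightarrow> bool"
  assumes "signed_graph Ep En"
  shows "sstep a b Ep En x \<bullet> y = x \<bullet> y - a/2 * S2 Ep x y + b/2 * S2 En x y"
proof -
  have sp: "\<And>i j. Ep i j \<Longrightarrow> Ep j i" and sn: "\<And>i j. En i j \<Longrightarrow> En j i"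
    using assms unfolding signed_graph_def by auto
  have "sstep a b Ep En x \<bullet> y = (\<Sum>i\<in>UNIV. (x$i + a * (\<Sum>j\<in>nbrs Ep i. x$j - x$i)
                                   - b * (\<Sum>j\<in>nbrs En i. x$j - x$i)) * y$i)"
    unfolding sstep_def inner_vec_def by simp
  also have "\<dots> = (\<Sum>i\<in>UNIV. x$i * y$i) + a * (\<Sum>i\<in>UNIV. (\<Sum>j\<in>nbrs Ep i. x$j - x$i) * y$i)
       - b * (\<Sum>i\<in>UNIV. (\<Sum>j\<in>nbrs En i. x$j - x$i) * y$i)"
    by (simp add: algebra_simps sum.distrib sum_subtractf sum_distrib_left)
  also have "\<dots> = x \<bullet> y - a/2 * S2 Ep x y + b/2 * S2 En x y"
    using lapl_form[OF sp, where x=x and y=y] lapl_form[OF sn, where x=x and y=y] by (simp add: inner_vec_def)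
  finally show ?thesis .
qed

lemma sstep_selfadj:
  assumes "signed_graph Ep En"
  shows "sstep a b Ep En x \<bullet> y = x \<bullet> sstep a b Ep En y"
  using sstep_inner[OF assms, of a b x y] sstep_inner[OF assms, of a b y x]
  by (simp add: S2_sym inner_commute)

lemma sstep_linear: "linear (sstep a b Ep En)"
  by (rule linearI) (simp_all add: sstep_def vec_eq_iff algebra_simps sum.distrib sum_subtractf sum_distrib_left)

lemma sstep_one: "sstep a b Ep En (\<chi> i. 1) = (\<chi> i. 1)"
  by (simp add: sstep_def vec_eq_iff)

lemma if_sum_card: "(\<Sum>j\<in>UNIV. if E i j then (c::real) else 0) = c * real (card (nbrs E i))"
  for E :: "'n::finite \<Rightarrow> 'n \<Rightarrow> bool"
  using nbrs_sum[where E=E and i=i and g="\<lambda>_. c"] by (simp add: mult.commute)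

lemma card_le_max: "card (nbrs Ep i) \<le> max_pos_deg Ep"
  unfolding max_pos_deg_def pos_deg_def by (rule Max_ge) auto

lemma S2_upper:
  fixes Ep :: "'n::finite \<Rightarrow> 'n \<Rightarrow> bool"
  assumes sym: "\<And>i j. Ep i j \<Longrightarrow> Ep j i"
  shows "S2 Ep x x \<le> 4 * real (max_pos_deg Ep) * (x \<bullet> x)"
proof -
  let ?d = "real (max_pos_deg Ep)"
  have "S2 Ep x x \<le> (\<Sum>i\<in>UNIV. \<Sum>j\<in>UNIV. (if Ep i j then 2 * (x$i)^2 else 0) + (if Ep i j then 2 * (x$j)^2 else 0))"
    unfolding S2_def
  proof (intro sum_mono)
    fix i j
    have "(x$j - x$i) * (x$j - x$i) \<le> 2 * (x$i)^2 + 2 * (x$j)^2"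
      using sum_squares_ge_zero[of "x$i + x$j" 0] by (simp add: power2_eq_square algebra_simps)
    then show "(if Ep i j then (x$j - x$i) * (x$j - x$i) else 0) \<le> (if Ep i j then 2 * (x$i)^2 else 0) + (if Ep i j then 2 * (x$j)^2 else 0)"
      by simp
  qed
  also have "\<dots> = (\<Sum>i\<in>UNIV. \<Sum>j\<in>UNIV. if Ep i j then 2 * (x$i)^2 else 0) + (\<Sum>i\<in>UNIV. \<Sum>j\<in>UNIV. if Ep i j then 2 * (x$j)^2 else 0)"
    by (simp add: sum.distrib)
  also have "(\<Sum>i\<in>UNIV. \<Sum>j\<in>UNIV. if Ep i j then 2 * (x$j)^2 else 0) = (\<Sum>j\<in>UNIV. \<Sum>i\<in>UNIV. if Ep i j then 2 * (x$j)^2 else 0)"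
    by (rule sum.swap)
  also have "\<dots> = (\<Sum>i\<in>UNIV. \<Sum>j\<in>UNIV. if Ep i j then 2 * (x$i)^2 else 0)"
    by (rule sum.cong[OF refl], rule sum.cong[OF refl]) (use sym in \<open>metis\<close>)
  also have "(\<Sum>i\<in>UNIV. \<Sum>j\<in>UNIV. if Ep i j then 2 * (x$i)^2 else 0) = (\<Sum>i\<in>UNIV. 2 * (x$i)^2 * real (card (nbrs Ep i)))"
    by (simp add: if_sum_card)
  also have "\<dots> \<le> (\<Sum>i\<in>UNIV. 2 * (x$i)^2 * ?d)"
    by (intro sum_mono mult_left_mono) (auto simp: card_le_max)
  finally have "S2 Ep x x \<le> 2 * (\<Sum>i\<in>UNIV. 2 * (x$i)^2 * ?d)" by simp
  also have "\<dots> = 4 * ?d * (x \<bullet> x)"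
    by (simp add: inner_vec_def sum_distrib_left sum_distrib_right power2_eq_square algebra_simps)
  finally show ?thesis .
qed

lemma S2_term:
  fixes E :: "'n::finite \<Rightarrow> 'n \<Rightarrow> bool"
  assumes "E m j"
  shows "(x$j - x$m)^2 \<le> S2 E x x"
proof -
  have "(x$j - x$m)^2 = (if E m j then (x$j - x$m) * (x$j - x$m) else 0)"
    using assms by (simp add: power2_eq_square)
  also have "\<dots> \<le> (\<Sum>j'\<in>UNIV. if E m j' then (x$j' - x$m) * (x$j' - x$m) else 0)"
    by (rule member_le_sum) auto
  also have "\<dots> \<le> S2 E x x"
    unfolding S2_def by (rule member_le_sum[where f="\<lambda>i. \<Sum>j'\<in>UNIV. if E i j' then (x$j' - x$i) * (x$j' - x$i) else 0"]) (auto intro: sum_nonneg)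
  finally show ?thesis .
qed

lemma S2_term_abs:
  fixes E :: "'n::finite \<Rightarrow> 'n \<Rightarrow> bool"
  assumes "E m j"
  shows "\<bar>x$m - x$j\<bar> \<le> sqrt (S2 E x x)"
proof -
  have "sqrt ((x$j - x$m)^2) \<le> sqrt (S2 E x x)"
    using S2_term[where E=E and m=m and j=j and x=x, OF assms] by (rule real_sqrt_le_mono)
  then show ?thesis by simp
qed

lemma path_bound:
  fixes E :: "'n::finite \<Rightarrow> 'n \<Rightarrow> bool"
  assumes "E\<^sup>*\<^sup>* i j"
  shows "\<exists>k\<ge>0. \<forall>x. \<bar>x$i - x$j\<bar> \<le> k * sqrt (S2 E x x)"
  using assms
proof (induction rule: rtranclp_induct)
  case base
  then show ?case by (intro exI[of _ 0]) simp
next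
  case (step m j)
  then obtain k where k: "k \<ge> 0" "\<And>x. \<bar>x$i - x$m\<bar> \<le> k * sqrt (S2 E x x)" by blast
  show ?case
  proof (intro exI[of _ "k+1"] conjI allI)
    fix x :: "real^'n"
    have "\<bar>x$i - x$j\<bar> \<le> \<bar>x$i - x$m\<bar> + \<bar>x$m - x$j\<bar>" by linarith
    also have "\<dots> \<le> k * sqrt (S2 E x x) + sqrt (S2 E x x)"
      using k(2)[of x] S2_term_abs[where E=E and m=m and j=j and x=x, OF step(2)] by simp
    finally show "\<bar>x$i - x$j\<bar> \<le> (k+1) * sqrt (S2 E x x)" by (simp add: algebra_simps)
  qed (use k in simp)
qed

lemma conn_bound:
  fixes Ep :: "'n::finite \<Rightarrow> 'n \<Rightarrow> bool"
  assumes "connected_graph Ep"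
  shows "\<exists>\<kappa>>0. \<forall>x. x \<bullet> (\<chi> i. 1) = 0 \<longrightarrow> \<kappa> * (x \<bullet> x) \<le> S2 Ep x x"
proof -
  have "\<forall>i j. \<exists>k. k \<ge> 0 \<and> (\<forall>x. \<bar>x$i - x$j\<bar> \<le> k * sqrt (S2 Ep x x))"
    using path_bound assms unfolding connected_graph_def by blast
  then obtain k where k: "\<And>i j. k i j \<ge> 0" "\<And>i j x. \<bar>x$i - x$j\<bar> \<le> k i j * sqrt (S2 Ep x x)"
    by metis
  define K where "K = (\<Sum>i\<in>UNIV. \<Sum>j\<in>UNIV. k i j)"
  have kK: "k i j \<le> K" for i j
  proof -
    have "k i j \<le> (\<Sum>j\<in>UNIV. k i j)" by (rule member_le_sum) (auto intro: k)
    also have "\<dots> \<le> K" unfolding K_def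
      by (rule member_le_sum[where f="\<lambda>i. \<Sum>j\<in>UNIV. k i j"]) (auto intro: sum_nonneg k)
    finally show ?thesis .
  qed
  have K0: "K \<ge> 0" using kK[of undefined undefined] k(1)[of undefined undefined] by simp
  have dK: "\<bar>x$i - x$j\<bar> \<le> K * sqrt (S2 Ep x x)" for x i j
    using k(2)[of x i j] kK[of i j] mult_right_mono[of "k i j" K "sqrt (S2 Ep x x)"] S2_nonneg[of Ep x] by simp
  define n where "n = real CARD('n)"
  have n0: "n > 0" unfolding n_def by simp
  define \<kappa> where "\<kappa> = 1 / (n * K^2 + 1)"
  have pos: "n * K^2 + 1 > 0" proof -
    have "n * K^2 \<ge> 0" using n0 by simp
    then show ?thesis by linarith
  qed
  show ?thesis
  proof (intro exI[of _ \<kappa>] conjI allI impI)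
    show "\<kappa> > 0" unfolding \<kappa>_def using pos by simp
    fix x :: "real^'n"
    assume "x \<bullet> (\<chi> i. 1) = 0"
    then have sum0: "(\<Sum>j\<in>UNIV. x$j) = 0" by (simp add: inner_vec_def)
    let ?S = "S2 Ep x x"
    have S0: "?S \<ge> 0" by (rule S2_nonneg)
    have xi: "(x$i)^2 \<le> K^2 * ?S" for i
    proof -
      have "n * x$i = (\<Sum>j\<in>UNIV. x$i - x$j)"
        using sum0 by (simp add: sum_subtractf n_def)
      then have "n * \<bar>x$i\<bar> \<le> (\<Sum>j\<in>UNIV. \<bar>x$i - x$j\<bar>)"
        using n0 by (metis abs_mult abs_of_pos sum_abs)
      also have "\<dots> \<le> (\<Sum>j\<in>(UNIV::'n set). K * sqrt ?S)" by (rule sum_mono) (rule dK)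
      also have "\<dots> = n * (K * sqrt ?S)" by (simp add: n_def)
      finally have "\<bar>x$i\<bar> \<le> K * sqrt ?S" using n0 by simp
      then have "\<bar>x$i\<bar>^2 \<le> (K * sqrt ?S)^2"
        by (intro power_mono) auto
      then show ?thesis using S0 by (simp add: power_mult_distrib)
    qed
    have "x \<bullet> x = (\<Sum>i\<in>UNIV. (x$i)^2)" by (simp add: inner_vec_def power2_eq_square)
    also have "\<dots> \<le> (\<Sum>i\<in>(UNIV::'n set). K^2 * ?S)" by (intro sum_mono xi)
    also have "\<dots> = n * K^2 * ?S" by (simp add: n_def)
    also have "\<dots> \<le> (n * K^2 + 1) * ?S" using S0 by (simp add: algebra_simps)
    finally have "x \<bullet> x \<le> (n * K^2 + 1) * ?S" .
    then show "\<kappa> * (x \<bullet> x) \<le> ?S" unfolding \<kappa>_def using pos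
      by (simp add: field_simps)
  qed
qed



lemma quad_expand:
  fixes f :: "'a::real_inner \<Rightarrow> 'a"
  assumes lin: "linear f" and sa: "\<And>x y. f x \<bullet> y = x \<bullet> f y"
  shows "(u + s *\<^sub>R w) \<bullet> f (u + s *\<^sub>R w) = u \<bullet> f u + 2 * s * (w \<bullet> f u) + s^2 * (w \<bullet> f w)"
proof -
  have "f (u + s *\<^sub>R w) = f u + s *\<^sub>R f w"
    using lin by (simp add: linear_add linear_scale)
  moreover have "u \<bullet> f w = w \<bullet> f u" using sa[of u w] by (simp add: inner_commute)
  ultimately show ?thesis
    by (simp add: inner_add_left inner_add_right power2_eq_square algebra_simps)
qed

lemma normbound:
  fixes f :: "'a::real_inner \<Rightarrow> 'a"
  assumes lin: "linear f" and sa: "\<And>x y. f x \<bullet> y = x \<bullet> f y"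
    and fe: "f e = e" and c0: "c \<ge> 0"
    and Q: "\<And>x. x \<bullet> e = 0 \<Longrightarrow> \<bar>x \<bullet> f x\<bar> \<le> c * (x \<bullet> x)"
    and u: "u \<bullet> e = 0"
  shows "norm (f u) \<le> c * norm u"
proof (cases "f u = 0")
  case True then show ?thesis using c0 by simp
next
  case False
  then have u0: "u \<noteq> 0" using lin linear_0 by metis
  define w where "w = (norm u / norm (f u)) *\<^sub>R f u"
  have we: "w \<bullet> e = 0" unfolding w_def using sa[of u e] fe u by simp
  have nw: "norm w = norm u" unfolding w_def using False by simp
  have wfu: "w \<bullet> f u = norm u * norm (f u)"
    unfolding w_def using False by (simp add: power2_norm_eq_inner[symmetric] power2_eq_square)
  have e1: "(u + 1 *\<^sub>R w) \<bullet> f (u + 1 *\<^sub>R w) = u \<bullet> f u + 2 * 1 * (w \<bullet> f u) + 1^2 * (w \<bullet> f w)"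
    by (rule quad_expand[OF lin sa])
  have e2: "(u + (-1) *\<^sub>R w) \<bullet> f (u + (-1) *\<^sub>R w) = u \<bullet> f u + 2 * (-1) * (w \<bullet> f u) + (-1)^2 * (w \<bullet> f w)"
    by (rule quad_expand[OF lin sa])
  have q1: "\<bar>(u + 1 *\<^sub>R w) \<bullet> f (u + 1 *\<^sub>R w)\<bar> \<le> c * ((u + 1 *\<^sub>R w) \<bullet> (u + 1 *\<^sub>R w))"
    by (rule Q) (simp add: inner_add_left u we)
  have q2: "\<bar>(u + (-1) *\<^sub>R w) \<bullet> f (u + (-1) *\<^sub>R w)\<bar> \<le> c * ((u + (-1) *\<^sub>R w) \<bullet> (u + (-1) *\<^sub>R w))"
    by (rule Q) (simp add: inner_add_left inner_diff_left u we)
  have "(u + 1 *\<^sub>R w) \<bullet> (u + 1 *\<^sub>R w) + (u + (-1) *\<^sub>R w) \<bullet> (u + (-1) *\<^sub>R w) = 2 * (u \<bullet> u) + 2 * (w \<bullet> w)"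
    by (simp add: inner_add_left inner_add_right inner_diff_left inner_diff_right inner_commute)
  also have "\<dots> = 4 * (norm u)^2" using nw by (simp add: power2_norm_eq_inner[symmetric])
  finally have ss: "(u + 1 *\<^sub>R w) \<bullet> (u + 1 *\<^sub>R w) + (u + (-1) *\<^sub>R w) \<bullet> (u + (-1) *\<^sub>R w) = 4 * (norm u)^2" .
  have "4 * (w \<bullet> f u) \<le> c * (4 * (norm u)^2)"
    using e1 e2 q1 q2 ss by (simp add: abs_le_iff) (smt (verit) distrib_left)
  then have "norm u * norm (f u) \<le> norm u * (c * norm u)" using wfu by (simp add: power2_eq_square mult.assoc mult.left_commute)
  then show ?thesis using u0 by simp
qed

lemma small_pos:
  fixes a K :: real
  assumes "\<And>s. s > 0 \<Longrightarrow> 2 * a \<le> s * K" and "a \<ge> 0"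
  shows "a = 0"
proof (rule ccontr)
  assume "a \<noteq> 0"
  then have a0: "a > 0" using assms(2) by simp
  define s where "s = a / (\<bar>K\<bar> + 1)"
  have s0: "s > 0" unfolding s_def using a0 by (simp add: add_pos_nonneg)
  have "s * K \<le> s * \<bar>K\<bar>" using s0 by (simp add: mult_left_mono)
  also have "\<dots> < s * (\<bar>K\<bar> + 1)" using s0 by simp
  also have "\<dots> = a" unfolding s_def by (simp add: add_pos_nonneg)
  finally show False using assms(1)[OF s0] a0 by simp
qed

lemma eigen_exists:
  fixes f :: "'a::euclidean_space \<Rightarrow> 'a"
  assumes lin: "linear f" and sa: "\<And>x y. f x \<bullet> y = x \<bullet> f y"
    and v: "v \<bullet> f v > v \<bullet> v"
  shows "\<exists>u l. u \<noteq> 0 \<and> l > 1 \<and> f u = l *\<^sub>R u"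
proof -
  let ?g = "\<lambda>y. y \<bullet> f y"
  have cont: "continuous_on (sphere 0 1) ?g"
  proof -
    have "bounded_linear f" using lin by (simp add: linear_conv_bounded_linear)
    then have "continuous_on (sphere 0 1) f" by (rule linear_continuous_on)
    then show ?thesis by (intro continuous_intros)
  qed
  obtain u where u: "u \<in> sphere 0 1" and umax: "\<And>y. y \<in> sphere 0 1 \<Longrightarrow> ?g y \<le> ?g u"
    using continuous_attains_sup[OF compact_sphere _ cont] by (auto simp: sphere_eq_empty)
  define l where "l = ?g u"
  have nu: "norm u = 1" using u by simp
  have uu: "u \<bullet> u = 1" using nu by (simp add: power2_norm_eq_inner[symmetric])
  have gle: "?g y \<le> l * (y \<bullet> y)" for y
  proof (cases "y = 0")
    case True then show ?thesis using lin by (simp add: linear_0)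
  next
    case False
    let ?y = "(1 / norm y) *\<^sub>R y"
    have "?y \<in> sphere 0 1" using False by simp
    then have "?g ?y \<le> l" unfolding l_def by (rule umax)
    moreover have "?g ?y = ?g y / (norm y)^2"
      using lin by (simp add: linear_scale power2_eq_square)
    ultimately have "?g y / (norm y)^2 \<le> l" by simp
    then have "?g y \<le> l * (norm y)^2" using False by (simp add: divide_le_eq)
    then show ?thesis by (simp add: power2_norm_eq_inner)
  qed
  have v0: "v \<noteq> 0" using v lin by (auto simp: linear_0)
  have "v \<bullet> v > 0" using v0 by simp
  moreover have "1 * (v \<bullet> v) < l * (v \<bullet> v)" using gle[of v] v by simp
  ultimately have l1: "l > 1" using mult_less_cancel_right_pos by blast
  define w where "w = f u - l *\<^sub>R u"
  have wu: "w \<bullet> u = 0" unfolding w_def l_def using uu sa[of u u]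
    by (simp add: inner_diff_left inner_diff_right inner_commute)
  have wfu: "w \<bullet> f u = w \<bullet> w"
  proof -
    have "f u = w + l *\<^sub>R u" unfolding w_def by simp
    then show ?thesis using wu by (simp add: inner_add_right)
  qed
  have ineq: "2 * (w \<bullet> w) \<le> s * (l * (w \<bullet> w) - w \<bullet> f w)" if s0: "s > 0" for s
  proof -
    have "?g (u + s *\<^sub>R w) = l + 2 * s * (w \<bullet> w) + s^2 * (w \<bullet> f w)"
      using quad_expand[OF lin sa, of u s w] wfu unfolding l_def by simp
    moreover have "(u + s *\<^sub>R w) \<bullet> (u + s *\<^sub>R w) = 1 + s^2 * (w \<bullet> w)"
      using uu wu by (simp add: inner_add_left inner_add_right inner_commute power2_eq_square)
    ultimately have "l + 2 * s * (w \<bullet> w) + s^2 * (w \<bullet> f w) \<le> l * (1 + s^2 * (w \<bullet> w))"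
      using gle[of "u + s *\<^sub>R w"] by simp
    then have "s * (2 * (w \<bullet> w)) \<le> s * (s * (l * (w \<bullet> w) - w \<bullet> f w))"
      by (simp add: algebra_simps power2_eq_square)
    then show ?thesis using s0 by (simp add: mult_le_cancel_left_pos)
  qed
  have "w \<bullet> w = 0" by (rule small_pos[OF ineq]) simp_all
  then have "w = 0" by simp
  then have "f u = l *\<^sub>R u" unfolding w_def by simp
  moreover have "u \<noteq> 0" using nu by auto
  ultimately show ?thesis using l1 by blast
qed



lemma funpow_shift:
  fixes f :: "real^'n \<Rightarrow> real^'n"
  assumes lin: "linear f" and fe: "f e = e"
  shows "(f^^t) (m *\<^sub>R e + y) = m *\<^sub>R e + (f^^t) y"
  by (induction t) (simp_all add: linear_add[OF lin] linear_scale[OF lin] fe)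

lemma funpow_contract:
  fixes f :: "real^'n \<Rightarrow> real^'n"
  assumes sa: "\<And>x y. f x \<bullet> y = x \<bullet> f y" and fe: "f e = e"
    and nb: "\<And>u. u \<bullet> e = 0 \<Longrightarrow> norm (f u) \<le> c * norm u" and c0: "c \<ge> 0"
    and y: "y \<bullet> e = 0"
  shows "(f^^t) y \<bullet> e = 0 \<and> norm ((f^^t) y) \<le> c^t * norm y"
proof (induction t)
  case 0 then show ?case using y by simp
next
  case (Suc t)
  then have a: "(f^^t) y \<bullet> e = 0" and b: "norm ((f^^t) y) \<le> c^t * norm y" by auto
  have "(f^^Suc t) y \<bullet> e = (f^^t) y \<bullet> f e" using sa by simp
  also have "\<dots> = 0" using a fe by simp
  finally have 1: "(f^^Suc t) y \<bullet> e = 0" .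
  have "norm ((f^^Suc t) y) \<le> c * norm ((f^^t) y)" using nb[OF a] by simp
  also have "\<dots> \<le> c * (c^t * norm y)" using b c0 by (rule mult_left_mono)
  finally show ?case using 1 by simp
qed

lemma funpow_eigen:
  fixes f :: "real^'n \<Rightarrow> real^'n"
  assumes sa: "\<And>x y. f x \<bullet> y = x \<bullet> f y" and fu: "f u = l *\<^sub>R u"
  shows "(f^^t) x \<bullet> u = l^t * (x \<bullet> u)"
proof (induction t)
  case 0 then show ?case by simp
next
  case (Suc t)
  have "(f^^Suc t) x \<bullet> u = (f^^t) x \<bullet> f u" using sa by simp
  also have "\<dots> = l * ((f^^t) x \<bullet> u)" using fu by simp
  finally show ?case using Suc by simp
qed

lemma pow_at_top:
  fixes l C :: real
  assumes l: "l > 1" and C: "C > 0"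
  shows "filterlim (\<lambda>t. l^t * C) at_top sequentially"
proof (subst filterlim_at_top, intro allI)
  fix Z :: real
  obtain N where N: "Z / C < l^N" using real_arch_pow[OF l] by blast
  show "eventually (\<lambda>t. Z \<le> l^t * C) sequentially"
    unfolding eventually_sequentially
  proof (intro exI[of _ N] allI impI)
    fix t assume "N \<le> t"
    then have "l^N \<le> l^t" using l by (simp add: power_increasing)
    then have "Z / C \<le> l^t" using N by simp
    then show "Z \<le> l^t * C" using C by (simp add: divide_le_eq)
  qed
qed

lemma hyperplane_null:
  fixes u :: "real^'n"
  assumes "u \<noteq> 0"
  shows "{x. u \<bullet> x = 0} \<in> null_sets lborel"
proof -
  have "negligible {x. u \<bullet> x = 0}" using negligible_hyperplane[of u 0] assms by simp
  then have "{x. u \<bullet> x = 0} \<in> null_sets (completion lborel)" by (simp add: negligible_iff_null_sets)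
  moreover have "{x. u \<bullet> x = 0} \<in> sets lborel"
    using closed_hyperplane[of u 0] by (simp add: borel_closed)
  ultimately show ?thesis by (simp add: null_sets_completion_iff)
qed



theorem theorem4p1:
  fixes Ep En :: "'n::finite \<Rightarrow> 'n \<Rightarrow> bool" and \<alpha> :: real
  assumes "signed_graph Ep En"
    and "connected_graph Ep"
    and "\<exists>i j. En i j"
    and "0 < \<alpha>" and "\<alpha> < 1 / real (max_pos_deg Ep)"
  shows "\<exists>\<beta>s::real. 0 \<le> \<beta>s \<and>
     (\<forall>\<beta>. 0 \<le> \<beta> \<and> \<beta> < \<beta>s \<longrightarrow>
        (\<forall>x0::real^'n. \<forall>i. (\<lambda>t. traj \<alpha> \<beta> Ep En x0 t $ i)
            \<longlonglongrightarrow> (\<Sum>j\<in>UNIV. x0 $ j) / real CARD('n))) \<and>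
     (\<forall>\<beta>. \<beta> > \<beta>s \<longrightarrow>
        (AE x0 in lborel. filterlim (\<lambda>t. norm (traj \<alpha> \<beta> Ep En x0 t)) at_top sequentially))"
proof -
  note sg = assms(1)
  have sp: "\<And>i j. Ep i j \<Longrightarrow> Ep j i" and sn: "\<And>i j. En i j \<Longrightarrow> En j i"
    and irn: "\<And>i. \<not> En i i"
    using sg unfolding signed_graph_def by auto
  define d where "d = real (max_pos_deg Ep)"
  have d0: "d > 0"
  proof (rule ccontr)
    assume "\<not> d > 0"
    then have "d = 0" unfolding d_def by simp
    then show False using assms(4,5) unfolding d_def by simp
  qed
  have ad: "\<alpha> * d < 1" using assms(5) d0 unfolding d_def[symmetric] by (simp add: field_simps)
  define one :: "real^'n" where "one = (\<chi> i. 1)"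
  define Q where "Q = (\<lambda>\<beta> x. x \<bullet> sstep \<alpha> \<beta> Ep En x)"
  have Qf: "Q \<beta> x = x \<bullet> x - \<alpha>/2 * S2 Ep x x + \<beta>/2 * S2 En x x" for \<beta> x
    unfolding Q_def using sstep_inner[OF sg, of \<alpha> \<beta> x x] by (simp add: inner_commute)
  have Qlow: "Q \<beta> x \<ge> (1 - 2 * \<alpha> * d) * (x \<bullet> x)" if "\<beta> \<ge> 0" for \<beta> x
  proof -
    have "\<alpha>/2 * S2 Ep x x \<le> \<alpha>/2 * (4 * d * (x \<bullet> x))"
      using S2_upper[OF sp, where x=x] assms(4) unfolding d_def by (intro mult_left_mono) auto
    moreover have "0 \<le> \<beta>/2 * S2 En x x" using that S2_nonneg[of En x] by simp
    ultimately show ?thesis unfolding Qf by (simp add: algebra_simps)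
  qed
  have Qmono: "Q \<beta>1 x \<le> Q \<beta>2 x" if "\<beta>1 \<le> \<beta>2" for \<beta>1 \<beta>2 x
    unfolding Qf using that S2_nonneg[of En x] by (simp add: mult_right_mono divide_right_mono)
  obtain \<kappa> where k0: "\<kappa> > 0" and kb: "\<And>x. x \<bullet> one = 0 \<Longrightarrow> \<kappa> * (x \<bullet> x) \<le> S2 Ep x x"
    using conn_bound[OF assms(2)] unfolding one_def by blast
  obtain a b where ab: "En a b" using assms(3) by blast
  have anb: "a \<noteq> b" using ab irn by blast
  define v0 :: "real^'n" where "v0 = axis a 1 - axis b 1"
  have v0one: "v0 \<bullet> one = 0" unfolding v0_def one_def by (simp add: inner_diff_left inner_axis')
  have v0v0: "v0 \<bullet> v0 = 2" unfolding v0_def using anb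
    by (simp add: inner_diff_left inner_diff_right inner_axis_axis)
  have v0N: "S2 En v0 v0 \<ge> 4"
  proof -
    have "(v0$b - v0$a)^2 \<le> S2 En v0 v0" by (rule S2_term[where E=En and m=a and j=b and x=v0, OF ab])
    moreover have "(v0$b - v0$a)^2 = 4" unfolding v0_def using anb by (simp add: axis_def)
    ultimately show ?thesis by simp
  qed
  define G where "G = {\<beta>. 0 \<le> \<beta> \<and> (\<exists>c<1. \<forall>v. v \<bullet> one = 0 \<longrightarrow> Q \<beta> v \<le> c * (v \<bullet> v))}"
  have G0: "0 \<in> G"
    unfolding G_def
  proof (intro CollectI conjI exI[of _ "1 - \<alpha> * \<kappa> / 2"] allI impI)
    show "1 - \<alpha> * \<kappa> / 2 < 1" using assms(4) k0 by simp
    fix v :: "real^'n" assume "v \<bullet> one = 0"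
    then have "\<kappa> * (v \<bullet> v) \<le> S2 Ep v v" by (rule kb)
    then have "\<alpha>/2 * (\<kappa> * (v \<bullet> v)) \<le> \<alpha>/2 * S2 Ep v v" using assms(4) by (intro mult_left_mono) auto
    then show "Q 0 v \<le> (1 - \<alpha> * \<kappa> / 2) * (v \<bullet> v)" unfolding Qf by (simp add: algebra_simps)
  qed simp
  have Gbd: "\<beta> \<le> 2 * \<alpha> * d" if "\<beta> \<in> G" for \<beta>
  proof -
    from that obtain c where b0: "\<beta> \<ge> 0" and c1: "c < 1" and cQ: "\<And>v. v \<bullet> one = 0 \<Longrightarrow> Q \<beta> v \<le> c * (v \<bullet> v)"
      unfolding G_def by blast
    have "Q \<beta> v0 \<le> c * 2" using cQ[OF v0one] v0v0 by simp
    moreover have "\<alpha>/2 * S2 Ep v0 v0 \<le> \<alpha>/2 * (4 * d * 2)"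
      using S2_upper[OF sp, where x=v0] assms(4) v0v0 unfolding d_def by (intro mult_left_mono) auto
    moreover have "\<beta>/2 * 4 \<le> \<beta>/2 * S2 En v0 v0" using b0 v0N by (intro mult_left_mono) auto
    ultimately show ?thesis unfolding Qf using v0v0 c1 by simp
  qed
  have bdd: "bdd_above G" using Gbd by (auto simp: bdd_above_def)
  have Gne: "G \<noteq> {}" using G0 by blast
  define \<beta>s where "\<beta>s = Sup G"
  have bs0: "\<beta>s \<ge> 0" unfolding \<beta>s_def using G0 bdd by (rule cSup_upper)
  show ?thesis
  proof (intro exI[of _ \<beta>s] conjI allI impI)
    show "0 \<le> \<beta>s" by (rule bs0)
  next
    fix \<beta> :: real and x0 :: "real^'n" and i :: 'n
    assume "0 \<le> \<beta> \<and> \<beta> < \<beta>s"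
    then have b0: "0 \<le> \<beta>" and bl: "\<beta> < \<beta>s" by auto
    obtain \<beta>' where b'G: "\<beta>' \<in> G" and bb': "\<beta> < \<beta>'"
      using bl less_cSup_iff[OF Gne bdd] unfolding \<beta>s_def by blast
    then obtain c where c1: "c < 1" and cQ: "\<And>v. v \<bullet> one = 0 \<Longrightarrow> Q \<beta>' v \<le> c * (v \<bullet> v)"
      unfolding G_def by blast
    define c' where "c' = max (max c (2 * \<alpha> * d - 1)) 0"
    have c'0: "c' \<ge> 0" and c'1: "c' < 1" unfolding c'_def using c1 ad by auto
    let ?f = "sstep \<alpha> \<beta> Ep En"
    have lin: "linear ?f" by (rule sstep_linear)
    have sa: "\<And>x y. ?f x \<bullet> y = x \<bullet> ?f y" by (rule sstep_selfadj[OF sg])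
    have fe: "?f one = one" unfolding one_def by (rule sstep_one)
    have Qabs: "\<bar>x \<bullet> ?f x\<bar> \<le> c' * (x \<bullet> x)" if "x \<bullet> one = 0" for x
    proof -
      have "x \<bullet> ?f x = Q \<beta> x" unfolding Q_def by simp
      moreover have "Q \<beta> x \<le> c' * (x \<bullet> x)"
      proof -
        have "Q \<beta> x \<le> Q \<beta>' x" using bb' by (intro Qmono) simp
        also have "\<dots> \<le> c * (x \<bullet> x)" by (rule cQ[OF that])
        also have "\<dots> \<le> c' * (x \<bullet> x)" unfolding c'_def by (intro mult_right_mono) auto
        finally show ?thesis .
      qed
      moreover have "- (c' * (x \<bullet> x)) \<le> Q \<beta> x"
      proof -
        have "(1 - 2 * \<alpha> * d) * (x \<bullet> x) \<le> Q \<beta> x" by (rule Qlow[OF b0])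
        moreover have "- c' \<le> 1 - 2 * \<alpha> * d" unfolding c'_def by simp
        then have "- c' * (x \<bullet> x) \<le> (1 - 2 * \<alpha> * d) * (x \<bullet> x)" by (intro mult_right_mono) auto
        ultimately show ?thesis by simp
      qed
      ultimately show ?thesis by (simp add: abs_le_iff)
    qed
    have nb: "\<And>u. u \<bullet> one = 0 \<Longrightarrow> norm (?f u) \<le> c' * norm u"
      by (rule normbound[OF lin sa fe c'0 Qabs])
    define m where "m = (\<Sum>j\<in>UNIV. x0 $ j) / real CARD('n)"
    define y where "y = x0 - m *\<^sub>R one"
    have yone: "y \<bullet> one = 0"
      unfolding y_def m_def one_def by (simp add: inner_diff_left inner_vec_def sum_subtractf)
    have x0y: "x0 = m *\<^sub>R one + y" unfolding y_def by simp
    have tr: "traj \<alpha> \<beta> Ep En x0 t $ i = m + (?f^^t) y $ i" for t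
      unfolding traj_def x0y funpow_shift[OF lin fe] by (simp add: one_def)
    have bnd: "norm ((?f^^t) y $ i) \<le> c'^t * norm y" for t
    proof -
      have "norm ((?f^^t) y $ i) \<le> norm ((?f^^t) y)" unfolding real_norm_def by (rule component_le_norm_cart)
      also have "\<dots> \<le> c'^t * norm y" using funpow_contract[OF sa fe nb c'0 yone] by blast
      finally show ?thesis .
    qed
    have "(\<lambda>t. c'^t * norm y) \<longlonglongrightarrow> 0 * norm y"
      by (intro tendsto_mult tendsto_const LIMSEQ_power_zero) (use c'0 c'1 in simp)
    then have lim0: "(\<lambda>t. c'^t * norm y) \<longlonglongrightarrow> 0" by simp
    have "(\<lambda>t. (?f^^t) y $ i) \<longlonglongrightarrow> 0"
      by (rule Lim_null_comparison[OF always_eventually lim0]) (rule allI, rule bnd)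
    then have "(\<lambda>t. m + (?f^^t) y $ i) \<longlonglongrightarrow> m + 0" by (intro tendsto_add tendsto_const)
    then show "(\<lambda>t. traj \<alpha> \<beta> Ep En x0 t $ i) \<longlonglongrightarrow> (\<Sum>j\<in>UNIV. x0 $ j) / real CARD('n)"
      unfolding tr m_def by simp
  next
    fix \<beta> :: real assume bg: "\<beta> > \<beta>s"
    obtain \<beta>' where b1: "\<beta>s < \<beta>'" and b2: "\<beta>' < \<beta>" using dense[OF bg] by blast
    have b'0: "\<beta>' > 0" using b1 bs0 by simp
    have b'nG: "\<beta>' \<notin> G"
    proof
      assume "\<beta>' \<in> G"
      then have "\<beta>' \<le> \<beta>s" unfolding \<beta>s_def using bdd by (rule cSup_upper)
      then show False using b1 by simp
    qed
    define r where "r = (\<beta> - \<beta>') / \<beta>'"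
    have r0: "r > 0" unfolding r_def using b2 b'0 by simp
    define \<delta> where "\<delta> = min (\<alpha> * \<kappa> / 4) (r * (\<alpha> * \<kappa> / 4))"
    have ak: "\<alpha> * \<kappa> > 0" using assms(4) k0 by simp
    have d0: "\<delta> > 0" unfolding \<delta>_def using ak r0 by simp
    have "\<not> (\<forall>v. v \<bullet> one = 0 \<longrightarrow> Q \<beta>' v \<le> (1 - \<delta>) * (v \<bullet> v))"
      using b'nG d0 b'0 unfolding G_def by (smt (verit, best) mem_Collect_eq)
    then obtain v where vone: "v \<bullet> one = 0" and vQ: "Q \<beta>' v > (1 - \<delta>) * (v \<bullet> v)" by auto
    let ?N = "S2 En v v" and ?P = "S2 Ep v v" and ?vv = "v \<bullet> v"
    have vv0: "?vv \<ge> 0" by simp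
    have P: "\<kappa> * ?vv \<le> ?P" by (rule kb[OF vone])
    have aP: "\<alpha>/2 * (\<kappa> * ?vv) \<le> \<alpha>/2 * ?P" using P assms(4) by (intro mult_left_mono) auto
    have dle: "\<delta> * ?vv \<le> \<alpha> * \<kappa> / 4 * ?vv" unfolding \<delta>_def using vv0 by (intro mult_right_mono) auto
    have N1: "\<beta>'/2 * ?N \<ge> \<alpha> * \<kappa> / 4 * ?vv"
      using vQ aP dle unfolding Qf by (simp add: algebra_simps)
    have "(\<beta> - \<beta>')/2 * ?N = r * (\<beta>'/2 * ?N)" unfolding r_def using b'0 by (simp add: field_simps)
    also have "\<dots> \<ge> r * (\<alpha> * \<kappa> / 4 * ?vv)" using N1 r0 by (intro mult_left_mono) auto
    finally have N2: "(\<beta> - \<beta>')/2 * ?N \<ge> r * (\<alpha> * \<kappa> / 4) * ?vv" by simp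
    have dle2: "\<delta> * ?vv \<le> r * (\<alpha> * \<kappa> / 4) * ?vv" unfolding \<delta>_def using vv0 by (intro mult_right_mono) auto
    have "Q \<beta> v = Q \<beta>' v + (\<beta> - \<beta>')/2 * ?N" unfolding Qf by (simp add: field_simps)
    moreover have "(1 - \<delta>) * ?vv = ?vv - \<delta> * ?vv" by (simp add: algebra_simps)
    ultimately have QB: "Q \<beta> v > ?vv" using vQ N2 dle2 by linarith
    let ?f = "sstep \<alpha> \<beta> Ep En"
    have lin: "linear ?f" by (rule sstep_linear)
    have sa: "\<And>x y. ?f x \<bullet> y = x \<bullet> ?f y" by (rule sstep_selfadj[OF sg])
    obtain u l where u0: "u \<noteq> 0" and l1: "l > 1" and fu: "?f u = l *\<^sub>R u"
      using eigen_exists[OF lin sa, of v] QB unfolding Q_def by blast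
    show "AE x0 in lborel. filterlim (\<lambda>t. norm (traj \<alpha> \<beta> Ep En x0 t)) at_top sequentially"
    proof (rule AE_I'[OF hyperplane_null[OF u0]])
      show "{x \<in> space lborel. \<not> filterlim (\<lambda>t. norm (traj \<alpha> \<beta> Ep En x t)) at_top sequentially} \<subseteq> {x. u \<bullet> x = 0}"
      proof (rule subsetI, rule ccontr)
        fix x assume xin: "x \<in> {x \<in> space lborel. \<not> filterlim (\<lambda>t. norm (traj \<alpha> \<beta> Ep En x t)) at_top sequentially}"
          and "x \<notin> {x. u \<bullet> x = 0}"
        then have xu: "x \<bullet> u \<noteq> 0" by (simp add: inner_commute)
        define C where "C = \<bar>x \<bullet> u\<bar> / norm u"
        have C0: "C > 0" unfolding C_def using xu u0 by simp
        have "l^t * C \<le> norm (traj \<alpha> \<beta> Ep En x t)" for t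
        proof -
          have "\<bar>l^t * (x \<bullet> u)\<bar> = \<bar>(?f^^t) x \<bullet> u\<bar>" using funpow_eigen[OF sa fu] by simp
          also have "\<dots> \<le> norm ((?f^^t) x) * norm u" by (rule Cauchy_Schwarz_ineq2)
          finally have "l^t * \<bar>x \<bullet> u\<bar> \<le> norm ((?f^^t) x) * norm u"
            using l1 by (simp add: abs_mult)
          then show ?thesis unfolding C_def traj_def using u0
            by (simp add: field_simps)
        qed
        then have "filterlim (\<lambda>t. norm (traj \<alpha> \<beta> Ep En x t)) at_top sequentially"
          by (intro filterlim_at_top_mono[OF pow_at_top[OF l1 C0]]) auto
        then show False using xin by simp
      qed
    qed
  qed
qed

end
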